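(* Let $n\ge 2$ be an integer, $\varepsilon\in(0,1]$, $\gamma>0$, and let $Q=2^q$ with $q\ge\max\{\log_2 n,\ \frac{4}{\gamma}\log_2\frac{3}{\varepsilon}\}$. Then with probability at least $3/4$, a random channel $W$ drawn from $\mathcal{W}_{Q,\varepsilon}$ satisfies $$\mathcal{R}^{(0)}_{W,n}\le 2q\left(1-\frac1n\right)(1+\gamma).$$ In particular, for $n=2$, $\mathcal{R}^{(0)}_{W,2}\le q(1+\gamma)$.
   Context: Fix an integer $q\ge1$, $Q=2^q$, $[Q]=\{1,\dots,Q\}$, and a symbol $\phi\notin[Q]$. A channel is a function $W=(W_1,W_2)$ with $W_i:[Q]^2\to\mathcal{O}$ for a finite output alphabet $\mathcal{O}$ (here $\mathcal{O}=[Q]\cup\{\phi\}$). For block length $n$, $W^{(n)}_i(x,y)=(W_i(x_1,y_1),\dots,W_i(x_n,y_n))$ for $x,y\in[Q]^n$. A code of block length $n$ with message sets $[M_1],[M_2]$ consists of encoders $E_i:[M_i]\to[Q]^n$ and decoders $D_i:\mathcal{O}^n\to[M_i]$; it succeeds on $(m_1,m_2)$ if $D_i(W^{(n)}_i(E_1(m_1),E_2(m_2)))=m_i$ for $i=1,2$. A rate pair $(R_1,R_2)$ is achievable with probability $1-\varepsilon$ and block length $n$ if, with $M_i=2^{R_in}$ (positive integers), some code succeeds with probability at least $1-\varepsilon$ for $(m_1,m_2)$ uniform on $[M_1]\times[M_2]$; $\mathcal{R}^{(\varepsilon)}_{W,n}$ is the supremum of $R_1+R_2$ over such pairs, $\mathcal{R}^{(\varepsilon)}_W=\sup_n\mathcal{R}^{(\varepsilon)}_{W,n}$;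 $\varepsilon=0$ means success on every message pair. $\mathcal{W}_{Q,\varepsilon}$ is the distribution over channels $W:[Q]^2\to([Q]\cup\{\phi\})^2$ in which, independently for every $(x,y)\in[Q]^2$, $W(x,y)=(\phi,\phi)$ with probability $\varepsilon$ and $W(x,y)=(x,y)$ otherwise. Logarithms are base 2. *)

theory Defs
  imports "HOL-Probability.Probability"
begin

text \<open>Inputs are [Q] = {1..Q}; outputs are \<open>nat option\<close>, with \<open>None\<close> playing the
  role of the erasure symbol phi.  A channel is \<open>W :: nat \<Rightarrow> nat \<Rightarrow> 'o \<times> 'o\<close>,
  \<open>fst (W x y)\<close> = W_1(x,y), \<open>snd (W x y)\<close> = W_2(x,y).\<close>

definition channel_out :: "(nat \<Rightarrow> nat \<Rightarrow> 'o \<times> 'o) \<Rightarrow> nat list \<Rightarrow> nat list \<Rightarrow> 'o list \<times> 'o list" where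
  "channel_out W x y = (map (\<lambda>(a,b). fst (W a b)) (zip x y), map (\<lambda>(a,b). snd (W a b)) (zip x y))"

definition zero_error_code ::
  "nat \<Rightarrow> nat \<Rightarrow> (nat \<Rightarrow> nat \<Rightarrow> 'o \<times> 'o) \<Rightarrow> nat \<Rightarrow> nat \<Rightarrow> bool" where
  "zero_error_code Q n W M1 M2 \<longleftrightarrow>
     (\<exists>(E1 :: nat \<Rightarrow> nat list) (E2 :: nat \<Rightarrow> nat list) (D1 :: 'o list \<Rightarrow> nat) (D2 :: 'o list \<Rightarrow> nat).
        (\<forall>m\<in>{1..M1}. length (E1 m) = n \<and> set (E1 m) \<subseteq> {1..Q}) \<and>
        (\<forall>m\<in>{1..M2}. length (E2 m) = n \<and> set (E2 m) \<subseteq> {1..Q}) \<and>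
        (\<forall>w. D1 w \<in> {1..M1}) \<and> (\<forall>w. D2 w \<in> {1..M2}) \<and>
        (\<forall>m1\<in>{1..M1}. \<forall>m2\<in>{1..M2}.
           D1 (fst (channel_out W (E1 m1) (E2 m2))) = m1 \<and>
           D2 (snd (channel_out W (E1 m1) (E2 m2))) = m2))"

definition zero_error_rate :: "nat \<Rightarrow> nat \<Rightarrow> (nat \<Rightarrow> nat \<Rightarrow> 'o \<times> 'o) \<Rightarrow> real" where
  "zero_error_rate Q n W =
     Sup {(log 2 (real M1) + log 2 (real M2)) / real n | M1 M2.
            M1 \<ge> 1 \<and> M2 \<ge> 1 \<and> zero_error_code Q n W M1 M2}"

definition erasure_channel :: "(nat \<times> nat \<Rightarrow> bool) \<Rightarrow> nat \<Rightarrow> nat \<Rightarrow> nat option \<times> nat option" where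
  "erasure_channel e x y = (if e (x, y) then (None, None) else (Some x, Some y))"

definition erasure_pattern_pmf :: "nat \<Rightarrow> real \<Rightarrow> (nat \<times> nat \<Rightarrow> bool) pmf" where
  "erasure_pattern_pmf Q eps = Pi_pmf ({1..Q} \<times> {1..Q}) False (\<lambda>_. bernoulli_pmf eps)"

end

theory Submission
  imports Defs
begin

lemma rect_rowgood:
  fixes P :: "nat \<Rightarrow> nat \<Rightarrow> bool" and T :: nat
  assumes good: "\<forall>R F. R \<subseteq> S1 \<longrightarrow> F \<subseteq> S2 \<longrightarrow> (\<forall>r\<in>R. \<forall>c\<in>F. \<not> P r c) \<longrightarrow> card R * card F < T"
    and RS: "R \<subseteq> S1" and VS: "V \<subseteq> S2" and fin1: "finite S1" and fin2: "finite S2"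
    and rg: "\<forall>r\<in>R. \<forall>v\<in>V. \<forall>v'\<in>V. P r v \<longrightarrow> P r v' \<longrightarrow> v = v'"
  shows "card R * card V \<le> 4*T + card S1"
proof -
  have finV: "finite V" using VS fin2 finite_subset by blast
  have finR: "finite R" using RS fin1 finite_subset by blast
  obtain V2 where V2: "V2 \<subseteq> V" "card V2 = card V div 2" "finite V2"
    using obtain_subset_with_card_n[of "card V div 2" V] by auto
  define V1 where "V1 = V - V2"
  have cV1: "card V1 = card V - card V div 2" unfolding V1_def using V2 finV
    by (simp add: card_Diff_subset)
  define C1 where "C1 = {r\<in>R. \<forall>v\<in>V1. \<not> P r v}"
  define C2 where "C2 = {r\<in>R. \<forall>v\<in>V2. \<not> P r v}"
  have RC: "R \<subseteq> C1 \<union> C2"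
  proof
    fix r assume r: "r \<in> R"
    show "r \<in> C1 \<union> C2"
    proof (rule ccontr)
      assume "r \<notin> C1 \<union> C2"
      then obtain v1 v2 where "v1 \<in> V1" "P r v1" "v2 \<in> V2" "P r v2"
        using r unfolding C1_def C2_def by auto
      moreover have "v1 \<in> V" "v2 \<in> V" using \<open>v1 \<in> V1\<close> \<open>v2 \<in> V2\<close> V2 V1_def by auto
      ultimately have "v1 = v2" using rg r by blast
      thus False using \<open>v1 \<in> V1\<close> \<open>v2 \<in> V2\<close> V1_def by auto
    qed
  qed
  have c1: "card C1 * card V1 < T"
    using good[rule_format, of C1 V1] RS VS unfolding C1_def V1_def by auto
  have c2: "card C2 * card V2 < T"
    using good[rule_format, of C2 V2] RS VS V2 unfolding C2_def by auto
  have fC: "finite C1" "finite C2" using finR unfolding C1_def C2_def by auto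
  have cR: "card R \<le> card C1 + card C2"
    by (meson RC card_Un_le card_mono fC finite_UnI le_trans)
  have "card V2 \<le> card V1" using cV1 V2 by simp
  have "card R * card V2 \<le> (card C1 + card C2) * card V2" using cR by simp
  also have "\<dots> = card C1 * card V2 + card C2 * card V2" by (simp add: algebra_simps)
  also have "\<dots> \<le> card C1 * card V1 + card C2 * card V2"
    using \<open>card V2 \<le> card V1\<close> by simp
  finally have h: "card R * card V2 \<le> 2 * T" using c1 c2 by linarith
  have "card V \<le> 2 * card V2 + 1" using V2 by simp
  hence "card R * card V \<le> card R * (2 * card V2 + 1)" by (rule mult_le_mono2)
  also have "\<dots> = 2 * (card R * card V2) + card R" by (simp add: algebra_simps)
  also have "\<dots> \<le> 4 * T + card S1" using h card_mono[OF fin1 RS] by linarith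
  finally show ?thesis .
qed


lemma fiber_count:
  fixes h :: "'a \<Rightarrow> 'b"
  assumes fin: "finite A" and fb: "\<And>p. card {x\<in>A. h x = p} * s \<le> U"
  shows "card A * s \<le> U * card (h ` A)"
proof -
  have "card A = (\<Sum>p\<in>h ` A. card {x\<in>A. h x = p})"
    using sum.group[OF fin finite_imageI[OF fin] subset_refl, where g=h and h="\<lambda>_. (1::nat)"] by simp
  hence "card A * s = (\<Sum>p\<in>h ` A. card {x\<in>A. h x = p} * s)" by (simp add: sum_distrib_right)
  also have "\<dots> \<le> (\<Sum>p\<in>h ` A. U)" by (rule sum_mono) (rule fb)
  also have "\<dots> = U * card (h ` A)" by simp
  finally show ?thesis .
qed

lemma out_cons:
  "fst (channel_out W (a#x) (b#y)) = fst (W a b) # fst (channel_out W x y)"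
  "snd (channel_out W (a#x) (b#y)) = snd (W a b) # snd (channel_out W x y)"
  by (simp_all add: channel_out_def)

lemma list2: "length x \<ge> 2 \<Longrightarrow> x = hd x # x!1 # drop 2 x"
  by (cases x; cases "tl x") auto


lemma code_bound:
  fixes e :: "nat \<times> nat \<Rightarrow> bool" and T :: nat
  assumes code: "zero_error_code Q n (erasure_channel e) M1 M2"
    and n2: "n \<ge> 2" and M1: "M1 \<ge> 1" and M2: "M2 \<ge> 1"
    and good: "\<forall>R F. R \<subseteq> {1..Q} \<longrightarrow> F \<subseteq> {1..Q} \<longrightarrow> (\<forall>r\<in>R. \<forall>c\<in>F. \<not> e (r,c)) \<longrightarrow> card R * card F < T"
  shows "M1 * M2 \<le> (4*T+Q)^2 * Q^(2*(n-2))"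
proof -
  define W where "W = erasure_channel e"
  obtain E1 E2 D1 D2 where
    E1: "\<forall>m\<in>{1..M1}. length (E1 m) = n \<and> set (E1 m) \<subseteq> {1..Q}" and
    E2: "\<forall>m\<in>{1..M2}. length (E2 m) = n \<and> set (E2 m) \<subseteq> {1..Q}" and
    D: "\<forall>m1\<in>{1..M1}. \<forall>m2\<in>{1..M2}. D1 (fst (channel_out W (E1 m1) (E2 m2))) = m1 \<and>
           D2 (snd (channel_out W (E1 m1) (E2 m2))) = m2"
    using code unfolding zero_error_code_def W_def by blast
  define A where "A = E1 ` {1..M1}"
  define B where "B = E2 ` {1..M2}"
  define U where "U = 4*T+Q"
  define L where "L = {xs. set xs \<subseteq> {1..Q} \<and> length xs = n-2}"
  have cardL: "card L = Q^(n-2)" unfolding L_def using card_lists_length_eq[of "{1..Q}"] by simp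
  have finL: "finite L" unfolding L_def by (simp add: finite_lists_length_eq)
  have inj1: "inj_on E1 {1..M1}"
  proof (rule inj_onI)
    fix m m' assume "m \<in> {1..M1}" "m' \<in> {1..M1}" "E1 m = E1 m'"
    thus "m = m'" using D M2 by (metis atLeastAtMost_iff le_refl)
  qed
  have inj2: "inj_on E2 {1..M2}"
  proof (rule inj_onI)
    fix m m' assume "m \<in> {1..M2}" "m' \<in> {1..M2}" "E2 m = E2 m'"
    thus "m = m'" using D M1 by (metis atLeastAtMost_iff le_refl)
  qed
  have cA: "card A = M1" unfolding A_def using card_image[OF inj1] by simp
  have cB: "card B = M2" unfolding B_def using card_image[OF inj2] by simp
  have finA: "finite A" "finite B" unfolding A_def B_def by auto
  have lenA: "\<forall>x\<in>A. length x = n \<and> set x \<subseteq> {1..Q}" using E1 A_def by auto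
  have lenB: "\<forall>x\<in>B. length x = n \<and> set x \<subseteq> {1..Q}" using E2 B_def by auto
  have F1: "a = a'" if h: "a#t \<in> A" "a'#t \<in> A" "b#s \<in> B" "e(a,b)" "e(a',b)" for a a' t b s
  proof -
    obtain m1 where m1: "m1 \<in> {1..M1}" "E1 m1 = a#t" using h(1) unfolding A_def by auto
    obtain m1' where m1': "m1' \<in> {1..M1}" "E1 m1' = a'#t" using h(2) unfolding A_def by auto
    obtain m2 where m2: "m2 \<in> {1..M2}" "E2 m2 = b#s" using h(3) unfolding B_def by auto
    have "fst (channel_out W (a#t) (b#s)) = fst (channel_out W (a'#t) (b#s))"
      using h(4,5) by (simp add: out_cons W_def erasure_channel_def)
    hence "m1 = m1'" using D m1 m1' m2 by metis
    thus ?thesis using m1 m1' by simp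
  qed
  have F2: "b = b'" if h: "c#r#u \<in> A" "a#b#s \<in> B" "a#b'#s \<in> B" "e(r,b)" "e(r,b')" for c r u a b b' s
  proof -
    obtain m1 where m1: "m1 \<in> {1..M1}" "E1 m1 = c#r#u" using h(1) unfolding A_def by auto
    obtain m2 where m2: "m2 \<in> {1..M2}" "E2 m2 = a#b#s" using h(2) unfolding B_def by auto
    obtain m2' where m2': "m2' \<in> {1..M2}" "E2 m2' = a#b'#s" using h(3) unfolding B_def by auto
    have "snd (channel_out W (c#r#u) (a#b#s)) = snd (channel_out W (c#r#u) (a#b'#s))"
      using h(4,5) by (simp add: out_cons W_def erasure_channel_def)
    hence "m2 = m2'" using D m1 m2 m2' by metis
    thus ?thesis using m2 m2' by simp
  qed
  define S0 where "S0 = hd ` B"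
  define R1 where "R1 = (\<lambda>x. x!1) ` A"
  have S0Q: "S0 \<subseteq> {1..Q}"
  proof
    fix d assume "d \<in> S0"
    then obtain y where y: "y \<in> B" "d = hd y" using S0_def by auto
    hence "y \<noteq> []" using lenB n2 by auto
    thus "d \<in> {1..Q}" using y lenB hd_in_set by blast
  qed
  have R1Q: "R1 \<subseteq> {1..Q}"
  proof
    fix d assume "d \<in> R1"
    then obtain y where y: "y \<in> A" "d = y!1" using R1_def by auto
    hence "1 < length y" using lenA n2 by auto
    thus "d \<in> {1..Q}" using y lenA nth_mem by blast
  qed
  have goodT: "\<forall>R F. R \<subseteq> {1..Q} \<longrightarrow> F \<subseteq> {1..Q} \<longrightarrow> (\<forall>r\<in>R. \<forall>c\<in>F. \<not> e (c,r)) \<longrightarrow> card R * card F < T"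
    using good by (metis mult.commute)
  have fibA: "card {x\<in>A. tl x = p} * card S0 \<le> U" for p
  proof -
    define Fp where "Fp = {x\<in>A. tl x = p}"
    have eqx: "x = hd x # p" if "x \<in> Fp" for x
    proof -
      have "x \<noteq> []" using that lenA n2 Fp_def by auto
      thus ?thesis using that Fp_def by auto
    qed
    have inj: "inj_on hd Fp" by (rule inj_onI) (metis eqx)
    have VQ: "hd ` Fp \<subseteq> {1..Q}"
    proof
      fix d assume "d \<in> hd ` Fp"
      then obtain y where y: "y \<in> Fp" "d = hd y" by auto
      hence "y \<noteq> []" using lenA n2 Fp_def by auto
      thus "d \<in> {1..Q}" using y lenA hd_in_set Fp_def by blast
    qed
    have rg: "\<forall>r\<in>S0. \<forall>v\<in>hd ` Fp. \<forall>v'\<in>hd ` Fp. e (v,r) \<longrightarrow> e (v',r) \<longrightarrow> v = v'"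
    proof (intro ballI impI)
      fix r v v' assume r: "r \<in> S0" and v: "v \<in> hd ` Fp" and v': "v' \<in> hd ` Fp"
        and ev: "e (v,r)" and ev': "e (v',r)"
      obtain y where y: "y \<in> B" "r = hd y" using r S0_def by auto
      have "y \<noteq> []" using y lenB n2 by auto
      hence yB: "r # tl y \<in> B" using y by auto
      obtain x where x: "x \<in> Fp" "v = hd x" using v by auto
      obtain x' where x': "x' \<in> Fp" "v' = hd x'" using v' by auto
      have "v # p \<in> A" using x eqx Fp_def by (metis (no_types, lifting) mem_Collect_eq)
      moreover have "v' # p \<in> A" using x' eqx Fp_def by (metis (no_types, lifting) mem_Collect_eq)
      ultimately show "v = v'" using F1 yB ev ev' by blast
    qed
    have "card S0 * card (hd ` Fp) \<le> 4*T + card {1..Q}"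
      by (rule rect_rowgood[OF goodT S0Q VQ]) (use rg in auto)
    thus ?thesis using card_image[OF inj] unfolding U_def Fp_def by (simp add: mult.commute)
  qed
  have A1: "card A * card S0 \<le> U * card (tl ` A)"
    by (rule fiber_count[OF finA(1) fibA])
  have tlA: "tl ` A \<subseteq> (\<lambda>(b,r). b#r) ` (R1 \<times> L)"
  proof
    fix z assume "z \<in> tl ` A"
    then obtain x where x: "x \<in> A" "z = tl x" by auto
    have "x = hd x # x!1 # drop 2 x" by (rule list2) (use lenA x n2 in auto)
    hence "z = x!1 # drop 2 x" using x by (metis list.sel(3))
    moreover have "drop 2 x \<in> L" using lenA x unfolding L_def by (auto dest: in_set_dropD)
    moreover have "x!1 \<in> R1" using x R1_def by auto
    ultimately show "z \<in> (\<lambda>(b,r). b#r) ` (R1 \<times> L)" by auto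
  qed
  have finR1: "finite R1" "finite S0" using finA R1_def S0_def by auto
  have "card (tl ` A) \<le> card (R1 \<times> L)"
    by (rule le_trans[OF card_mono[OF _ tlA] card_image_le]) (use finR1 finL in auto)
  hence ctl: "card (tl ` A) \<le> card R1 * Q^(n-2)" by (simp add: card_cartesian_product cardL)
  define h2 where "h2 = (\<lambda>y::nat list. (hd y, drop 2 y))"
  have fibB: "card {y\<in>B. h2 y = p} * card R1 \<le> U" for p
  proof -
    define Gp where "Gp = {y\<in>B. h2 y = p}"
    have eqy: "y = fst p # y!1 # snd p" if "y \<in> Gp" for y
    proof -
      have "y = hd y # y!1 # drop 2 y" by (rule list2) (use lenB that n2 Gp_def in auto)
      thus ?thesis using that Gp_def h2_def by auto
    qed
    have inj: "inj_on (\<lambda>y. y!1) Gp" by (rule inj_onI) (metis eqy)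
    have VQ: "(\<lambda>y. y!1) ` Gp \<subseteq> {1..Q}"
    proof
      fix d assume "d \<in> (\<lambda>y. y!1) ` Gp"
      then obtain y where y: "y \<in> Gp" "d = y!1" by auto
      hence "1 < length y" using lenB n2 Gp_def by auto
      thus "d \<in> {1..Q}" using y lenB nth_mem Gp_def by blast
    qed
    have rg: "\<forall>r\<in>R1. \<forall>v\<in>(\<lambda>y. y!1) ` Gp. \<forall>v'\<in>(\<lambda>y. y!1) ` Gp. e (r,v) \<longrightarrow> e (r,v') \<longrightarrow> v = v'"
    proof (intro ballI impI)
      fix r v v' assume r: "r \<in> R1" and v: "v \<in> (\<lambda>y. y!1) ` Gp" and v': "v' \<in> (\<lambda>y. y!1) ` Gp"
        and ev: "e (r,v)" and ev': "e (r,v')"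
      obtain x where x: "x \<in> A" "r = x!1" using r R1_def by auto
      have "x = hd x # x!1 # drop 2 x" by (rule list2) (use lenA x n2 in auto)
      hence xA: "hd x # r # drop 2 x \<in> A" using x by metis
      obtain y where y: "y \<in> Gp" "v = y!1" using v by auto
      obtain y' where y': "y' \<in> Gp" "v' = y'!1" using v' by auto
      have "fst p # v # snd p \<in> B" using y eqy Gp_def by (metis (no_types, lifting) mem_Collect_eq)
      moreover have "fst p # v' # snd p \<in> B" using y' eqy Gp_def by (metis (no_types, lifting) mem_Collect_eq)
      ultimately show "v = v'" using F2 xA ev ev' by blast
    qed
    have "card R1 * card ((\<lambda>y. y!1) ` Gp) \<le> 4*T + card {1..Q}"
      by (rule rect_rowgood[OF good R1Q VQ]) (use rg in auto)
    thus ?thesis using card_image[OF inj] unfolding U_def Gp_def by (simp add: mult.commute)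
  qed
  have B1: "card B * card R1 \<le> U * card (h2 ` B)"
    by (rule fiber_count[OF finA(2) fibB])
  have h2B: "h2 ` B \<subseteq> S0 \<times> L"
  proof
    fix z assume "z \<in> h2 ` B"
    then obtain y where y: "y \<in> B" "z = h2 y" by auto
    have "drop 2 y \<in> L" using lenB y unfolding L_def by (auto dest: in_set_dropD)
    thus "z \<in> S0 \<times> L" using y S0_def h2_def by auto
  qed
  have "card (h2 ` B) \<le> card S0 * Q^(n-2)"
    using card_mono[OF _ h2B] finR1 finL by (simp add: card_cartesian_product cardL)
  have a1: "M1 * card S0 \<le> U * (card R1 * Q^(n-2))" using A1 ctl cA
    by (meson le_trans mult_le_mono2)
  have b1: "M2 * card R1 \<le> U * (card S0 * Q^(n-2))" using B1 \<open>card (h2 ` B) \<le> _\<close> cB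
    by (meson le_trans mult_le_mono2)
  have "(M1 * card S0) * (M2 * card R1) \<le> (U * (card R1 * Q^(n-2))) * (U * (card S0 * Q^(n-2)))"
    by (rule mult_le_mono[OF a1 b1])
  hence "(M1 * M2) * (card S0 * card R1) \<le> (U * (U * (Q ^ (n - 2) * Q ^ (n - 2)))) * (card S0 * card R1)"
    by (simp add: algebra_simps)
  moreover have "card S0 > 0" "card R1 > 0"
    using finR1 M1 M2 cA cB unfolding S0_def R1_def by (auto simp: card_gt_0_iff)
  ultimately have "M1 * M2 \<le> U * (U * (Q ^ (n - 2) * Q ^ (n - 2)))" by simp
  moreover have pw: "Q^(2*(n-2)) = Q^(n-2)*Q^(n-2)" by (metis mult_2 power_add)
  ultimately have "M1 * M2 \<le> U^2 * Q^(2*(n-2))" by (metis power2_eq_square mult.assoc)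
  thus ?thesis unfolding U_def .
qed


definition goodpat :: "nat \<Rightarrow> nat \<Rightarrow> (nat \<times> nat \<Rightarrow> bool) \<Rightarrow> bool" where
  "goodpat Q T e \<longleftrightarrow> (\<forall>R F. R \<subseteq> {1..Q} \<longrightarrow> F \<subseteq> {1..Q} \<longrightarrow> (\<forall>r\<in>R. \<forall>c\<in>F. \<not> e (r,c)) \<longrightarrow> card R * card F < T)"

lemma prob_ev:
  assumes "R \<subseteq> {1..Q}" "F \<subseteq> {1..Q}" "0 \<le> eps" "eps \<le> 1"
  shows "measure_pmf.prob (erasure_pattern_pmf Q eps) {e. \<forall>r\<in>R. \<forall>c\<in>F. \<not> e (r,c)}
         = (1 - eps) ^ (card R * card F)"
proof -
  define A where "A = {1..Q} \<times> {1..Q}"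
  define B where "B = (\<lambda>x::nat\<times>nat. if x \<in> R \<times> F then {False} else (UNIV :: bool set))"
  have "{e. \<forall>r\<in>R. \<forall>c\<in>F. \<not> e (r,c)} = Pi A B"
    using assms(1,2) unfolding A_def B_def Pi_def by (auto; meson atLeastAtMost_iff subsetD)
  hence "measure_pmf.prob (erasure_pattern_pmf Q eps) {e. \<forall>r\<in>R. \<forall>c\<in>F. \<not> e (r,c)}
      = (\<Prod>x\<in>A. measure_pmf.prob (bernoulli_pmf eps) (B x))"
    unfolding erasure_pattern_pmf_def A_def by (simp add: measure_Pi_pmf_Pi)
  also have "\<dots> = (\<Prod>x\<in>A. if x \<in> R \<times> F then 1 - eps else 1)"
    by (rule prod.cong) (use assms(3,4) in \<open>auto simp: B_def measure_pmf_single\<close>)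
  also have "\<dots> = (1 - eps) ^ card (A \<inter> R \<times> F)"
    by (simp add: prod.If_cases A_def)
  also have "A \<inter> R \<times> F = R \<times> F" using assms(1,2) A_def by auto
  finally show ?thesis by (simp add: card_cartesian_product)
qed

lemma prob_bad:
  fixes eps :: real and Q T :: nat
  assumes e0: "0 < eps" and e1: "eps \<le> 1" and small: "(1-eps)^T \<le> 1 / 4^(Q+1)"
  shows "measure_pmf.prob (erasure_pattern_pmf Q eps) {e. \<not> goodpat Q T e} \<le> 1/4"
proof -
  define P where "P = {RF \<in> Pow {1..Q} \<times> Pow {1..Q}. card (fst RF) * card (snd RF) \<ge> T}"
  define Ev where "Ev = (\<lambda>RF::nat set \<times> nat set. {e. \<forall>r\<in>fst RF. \<forall>c\<in>snd RF. \<not> e (r,c)})"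
  have eq: "{e. \<not> goodpat Q T e} = (\<Union>RF\<in>P. Ev RF)"
    unfolding goodpat_def P_def Ev_def by (auto simp: not_less; blast)
  have finP: "finite P" unfolding P_def by auto
  have "measure_pmf.prob (erasure_pattern_pmf Q eps) (\<Union>RF\<in>P. Ev RF)
        \<le> (\<Sum>RF\<in>P. measure_pmf.prob (erasure_pattern_pmf Q eps) (Ev RF))"
    by (rule measure_pmf.finite_measure_subadditive_finite[OF finP]) auto
  also have "\<dots> \<le> (\<Sum>RF\<in>P. (1-eps)^T)"
  proof (rule sum_mono)
    fix RF assume "RF \<in> P"
    hence h: "fst RF \<subseteq> {1..Q}" "snd RF \<subseteq> {1..Q}" "card (fst RF) * card (snd RF) \<ge> T"
      unfolding P_def by auto
    have "measure_pmf.prob (erasure_pattern_pmf Q eps) (Ev RF) = (1-eps)^(card (fst RF) * card (snd RF))"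
      unfolding Ev_def by (rule prob_ev) (use h e0 e1 in auto)
    also have "\<dots> \<le> (1-eps)^T" by (rule power_decreasing) (use h e0 e1 in auto)
    finally show "measure_pmf.prob (erasure_pattern_pmf Q eps) (Ev RF) \<le> (1-eps)^T" .
  qed
  also have "\<dots> = card P * (1-eps)^T" by simp
  also have "\<dots> \<le> 4^Q * (1-eps)^T"
  proof (rule mult_right_mono)
    have "card P \<le> card (Pow {1..Q} \<times> Pow {1..Q})"
      by (rule card_mono) (auto simp: P_def)
    also have "\<dots> = 2^Q * 2^Q" by (simp add: card_cartesian_product card_Pow)
    also have "\<dots> = (4::nat)^Q" by (simp add: power_mult_distrib[symmetric])
    finally show "real (card P) \<le> 4^Q" by (metis of_nat_le_iff of_nat_numeral of_nat_power)
  qed (use e1 in auto)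
  also have "\<dots> \<le> 4^Q * (1 / 4^(Q+1))" by (rule mult_left_mono[OF small]) auto
  also have "\<dots> = 1/4" by simp
  finally show ?thesis using eq by simp
qed


lemma choose_T:
  fixes eps :: real and Q :: nat
  assumes e0: "0 < eps" and e1: "eps \<le> 1" and Q2: "Q \<ge> 2"
  defines "T \<equiv> nat \<lceil>1/eps\<rceil> * (2*Q+2)"
  shows "(1-eps)^T \<le> 1 / 4^(Q+1)" and "real (4*T+Q) \<le> 25 * Q / eps"
proof -
  define m where "m = nat \<lceil>1/eps\<rceil>"
  have "0 < 1/eps" using e0 by simp
  hence "0 \<le> \<lceil>1/eps\<rceil>" by (metis ceiling_le_zero not_le order_less_imp_le)
  hence rm: "real m = real_of_int \<lceil>1/eps\<rceil>" unfolding m_def by simp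
  have mge: "real m \<ge> 1/eps" unfolding rm by linarith
  have mle: "real m \<le> 2/eps"
  proof -
    have "real m \<le> 1/eps + 1" unfolding rm by (rule of_int_ceiling_le_add_one)
    also have "\<dots> \<le> 2/eps" using e0 e1 by (simp add: field_simps mult_left_le_one_le)
    finally show ?thesis .
  qed
  have "(1-eps)^m \<le> exp (-eps) ^ m"
    by (rule power_mono) (use exp_ge_add_one_self[of "-eps"] e1 in auto)
  also have "\<dots> = exp (real m * (-eps))" by (rule exp_of_nat_mult[symmetric])
  also have "\<dots> \<le> exp (-1)" using mge e0 by (simp add: field_simps)
  also have "\<dots> \<le> 1/2"
  proof -
    have "exp 1 \<ge> (2::real)" using exp_ge_add_one_self[of 1] by simp
    thus ?thesis by (simp add: exp_minus field_simps)
  qed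
  finally have h: "(1-eps)^m \<le> 1/2" .
  have "(1-eps)^T = ((1-eps)^m)^(2*Q+2)" unfolding T_def m_def by (rule power_mult)
  also have "\<dots> \<le> (1/2)^(2*Q+2)" by (rule power_mono[OF h]) (use e1 in auto)
  also have "\<dots> = 1 / 4^(Q+1)"
    by (simp add: power_mult power_divide)
  finally show "(1-eps)^T \<le> 1 / 4^(Q+1)" .
  have "real T = real m * (2*Q+2)" unfolding T_def m_def by (simp only: of_nat_mult of_nat_add of_nat_numeral)
  also have "\<dots> \<le> (2/eps) * (3*Q)"
    by (rule mult_mono) (use mle Q2 e0 in auto)
  finally have "real T \<le> 6 * Q / eps" by simp
  moreover have "real Q \<le> Q / eps" using e0 e1 by (simp add: field_simps mult_left_le_one_le)
  ultimately show "real (4*T+Q) \<le> 25 * Q / eps" by simp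
qed


theorem theorem1:
  fixes n q :: nat and eps gamma :: real
  assumes "n \<ge> 2" and "0 < eps" and "eps \<le> 1" and "gamma > 0" and "q \<ge> 1"
    and "real q \<ge> log 2 (real n)"
    and "real q \<ge> (4 / gamma) * log 2 (3 / eps)"
  shows "measure_pmf.prob (erasure_pattern_pmf (2 ^ q) eps)
           {e. zero_error_rate (2 ^ q) n (erasure_channel e)
                 \<le> 2 * real q * (1 - 1 / real n) * (1 + gamma)} \<ge> 3 / 4"
proof -
  note n2 = assms(1) and e0 = assms(2) and e1 = assms(3) and g0 = assms(4) and q1 = assms(5)
  define Q where "Q = (2::nat)^q"
  have Q2: "Q \<ge> 2" unfolding Q_def using q1
    by (metis power_increasing power_one_right one_le_numeral)
  define T where "T = nat \<lceil>1/eps\<rceil> * (2*Q+2)"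
  have small: "(1-eps)^T \<le> 1 / 4^(Q+1)" and Ub: "real (4*T+Q) \<le> 25 * Q / eps"
    using choose_T[OF e0 e1 Q2] unfolding T_def by auto
  define bound where "bound = 2 * real q * (1 - 1 / real n) * (1 + gamma)"
  have qg: "real q * gamma \<ge> 4 * log 2 (3/eps)"
    using assms(7) g0 by (simp add: field_simps)
  have p4: "2 powr (4 * log 2 (3/eps)) = (3/eps)^4"
  proof -
    have "2 powr (4 * log 2 (3/eps)) = (2 powr (log 2 (3/eps))) powr 4"
      by (simp add: powr_powr mult.commute)
    also have "\<dots> = (3/eps) powr 4" using e0 by simp
    also have "\<dots> = (3/eps)^4" using e0 powr_realpow[of "3/eps" 4] by simp
    finally show ?thesis .
  qed
  have x3: "3/eps \<ge> 3" using e0 e1 by (simp add: field_simps)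
  have "(3/eps)^4 = (3/eps)^3 * (3/eps)" by (simp add: power_Suc2 numeral_eq_Suc del: power_Suc)
  also have "\<dots> \<ge> 3^3 * (3/eps)"
    by (rule mult_right_mono[OF power_mono]) (use x3 e0 in auto)
  finally have "(3/eps)^4 \<ge> 81/eps" by simp
  hence pq: "2 powr (real q * gamma) \<ge> 25/eps"
  proof -
    have "25/eps \<le> 81/eps" using e0 by (simp add: divide_right_mono)
    thus ?thesis using powr_mono[OF qg, of 2] p4 \<open>(3/eps)^4 \<ge> 81/eps\<close> by linarith
  qed
  have UQ: "real (4*T+Q) \<le> 2 powr (real q * (1+gamma))"
  proof -
    have RQ: "real Q = 2 powr real q" unfolding Q_def by (simp add: powr_realpow)
    have "real (4*T+Q) \<le> real Q * (25/eps)" using Ub by (simp add: mult.commute)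
    also have "\<dots> \<le> real Q * 2 powr (real q * gamma)"
      by (rule mult_left_mono[OF pq]) simp
    also have "\<dots> = 2 powr (real q * (1+gamma))"
      unfolding RQ by (simp add: powr_add[symmetric] algebra_simps)
    finally show ?thesis .
  qed
  have Upos: "real (4*T+Q) > 0" using Q2 by simp
  have logU: "log 2 (real (4*T+Q)) \<le> real q * (1+gamma)"
  proof -
    have "log 2 (real (4*T+Q)) \<le> log 2 (2 powr (real q * (1+gamma)))"
      using UQ Upos by (subst log_le_cancel_iff) auto
    thus ?thesis by simp
  qed
  have logQ: "log 2 (real Q) = real q" unfolding Q_def by (simp add: log_nat_power)
  have key: "zero_error_rate Q n (erasure_channel e) \<le> bound" if g: "goodpat Q T e" for e
    unfolding zero_error_rate_def
  proof (rule cSup_least)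
    have "zero_error_code Q n (erasure_channel e) 1 1"
      unfolding zero_error_code_def
      apply (rule exI[where x="\<lambda>_. replicate n (1::nat)"])
      apply (rule exI[where x="\<lambda>_. replicate n (1::nat)"])
      apply (rule exI[where x="\<lambda>_::nat option list. 1::nat"])
      apply (rule exI[where x="\<lambda>_::nat option list. 1::nat"])
      using Q2 by auto
    thus "{(log 2 (real M1) + log 2 (real M2)) / real n |M1 M2.
          1 \<le> M1 \<and> 1 \<le> M2 \<and> zero_error_code Q n (erasure_channel e) M1 M2} \<noteq> {}"
      by blast
  next
    fix x assume "x \<in> {(log 2 (real M1) + log 2 (real M2)) / real n |M1 M2.
          1 \<le> M1 \<and> 1 \<le> M2 \<and> zero_error_code Q n (erasure_channel e) M1 M2}"
    then obtain M1 M2 where x: "x = (log 2 (real M1) + log 2 (real M2)) / real n"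
      and M: "1 \<le> M1" "1 \<le> M2" and code: "zero_error_code Q n (erasure_channel e) M1 M2"
      by blast
    have nb: "M1 * M2 \<le> (4*T+Q)^2 * Q^(2*(n-2))"
      by (rule code_bound[OF code n2 M(1) M(2)]) (use g in \<open>simp add: goodpat_def\<close>)
    have "log 2 (real M1) + log 2 (real M2) = log 2 (real (M1 * M2))"
      using M by (simp add: log_mult)
    also have "\<dots> \<le> log 2 (real ((4*T+Q)^2 * Q^(2*(n-2))))"
    proof -
      have r: "real (M1 * M2) \<le> real ((4*T+Q)^2 * Q^(2*(n-2)))" using nb by (simp only: of_nat_le_iff)
      have p: "real (M1 * M2) > 0" using M by simp
      show ?thesis using r p Q2 by (subst log_le_cancel_iff) (auto simp del: of_nat_mult of_nat_power)
    qed
    also have "\<dots> = 2 * log 2 (real (4*T+Q)) + real (2*(n-2)) * log 2 (real Q)"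
      using Upos Q2 by (simp add: log_mult log_nat_power)
    also have "\<dots> \<le> 2 * (real q * (1+gamma)) + real (2*(n-2)) * real q"
      using logU logQ by simp
    also have "\<dots> \<le> 2 * real q * (real n - 1) * (1 + gamma)"
    proof -
      have "real (2*(n-2)) = 2 * (real n - 2)" using n2 by simp
      moreover have "0 \<le> real q * (real n - 2) * gamma" using n2 g0 by simp
      ultimately show ?thesis by (simp add: algebra_simps)
    qed
    finally have "log 2 (real M1) + log 2 (real M2) \<le> 2 * real q * (real n - 1) * (1 + gamma)" .
    hence "x \<le> 2 * real q * (real n - 1) * (1 + gamma) / real n"
      unfolding x using n2 by (simp add: divide_right_mono)
    also have "\<dots> = bound" unfolding bound_def using n2 by (simp add: field_simps)
    finally show "x \<le> bound" .
  qed
  have sub: "UNIV - {e. \<not> goodpat Q T e} \<subseteq> {e. zero_error_rate Q n (erasure_channel e) \<le> bound}"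
    using key by auto
  have "measure_pmf.prob (erasure_pattern_pmf Q eps) (UNIV - {e. \<not> goodpat Q T e})
        = 1 - measure_pmf.prob (erasure_pattern_pmf Q eps) {e. \<not> goodpat Q T e}"
    using measure_pmf.prob_compl[of "{e. \<not> goodpat Q T e}" "erasure_pattern_pmf Q eps"] by simp
  also have "\<dots> \<ge> 3/4" using prob_bad[OF e0 e1 small] by simp
  finally have "3/4 \<le> measure_pmf.prob (erasure_pattern_pmf Q eps) (UNIV - {e. \<not> goodpat Q T e})" .
  also have "\<dots> \<le> measure_pmf.prob (erasure_pattern_pmf Q eps) {e. zero_error_rate Q n (erasure_channel e) \<le> bound}"
    by (rule measure_pmf.finite_measure_mono[OF sub]) simp
  finally show ?thesis unfolding Q_def bound_def .
qed

end
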